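(* For every finite simple graph $G$ and every integer $n\ge 2$, $$\chi_i(S_G^2)\le \chi_i(S_G^n)\le \chi_i(S_G^2)+1.$$
   Context: For a graph $H$, an injective $k$-coloring is a map $f:V(H)\to\{1,\dots,k\}$ such that any two distinct vertices $u,w$ with $f(u)=f(w)$ have no common neighbor. The injective chromatic number $\chi_i(H)$ is the least $k$ for which $H$ admits an injective $k$-coloring. For a graph $G$ and a positive integer $n$, the generalized Sierpiński graph $S_G^n$ has vertex set $V(G)^n$, and two vertices $(u_1,\dots,u_n)$, $(v_1,\dots,v_n)$ are adjacent if and only if there is $d\in\{1,\dots,n\}$ such that $u_i=v_i$ for all $i<d$, $u_dv_d\in E(G)$, and $u_i=v_d$ and $v_i=u_d$ for all $i>d$. (In particular $S_G^1\cong G$.) *)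

theory Defs
  imports Main
begin

definition simple_graph :: "'a set \<Rightarrow> ('a \<Rightarrow> 'a \<Rightarrow> bool) \<Rightarrow> bool" where
  "simple_graph V E \<longleftrightarrow> finite V \<and> (\<forall>u v. E u v \<longrightarrow> u \<in> V \<and> v \<in> V)
     \<and> (\<forall>u v. E u v \<longrightarrow> E v u) \<and> (\<forall>u. \<not> E u u)"

definition injective_coloring ::
  "'a set \<Rightarrow> ('a \<Rightarrow> 'a \<Rightarrow> bool) \<Rightarrow> nat \<Rightarrow> ('a \<Rightarrow> nat) \<Rightarrow> bool" where
  "injective_coloring V E k f \<longleftrightarrow> (\<forall>v\<in>V. f v \<in> {1..k})
     \<and> (\<forall>u\<in>V. \<forall>w\<in>V. u \<noteq> w \<and> f u = f w \<longrightarrow> \<not> (\<exists>x\<in>V. E u x \<and> E w x))"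

definition inj_chrom :: "'a set \<Rightarrow> ('a \<Rightarrow> 'a \<Rightarrow> bool) \<Rightarrow> nat" where
  "inj_chrom V E = (LEAST k. \<exists>f. injective_coloring V E k f)"

text \<open>Generalized Sierpinski graph S_G^n: vertices are words of length n over V (lists,
  0-indexed); u ~ v iff there is d < n with equal prefixes before d, E (u!d) (v!d),
  and u!i = v!d, v!i = u!d for all d < i < n.\<close>
definition sier_verts :: "'a set \<Rightarrow> nat \<Rightarrow> 'a list set" where
  "sier_verts V n = {xs. length xs = n \<and> set xs \<subseteq> V}"

definition sier_adj :: "('a \<Rightarrow> 'a \<Rightarrow> bool) \<Rightarrow> nat \<Rightarrow> 'a list \<Rightarrow> 'a list \<Rightarrow> bool" where
  "sier_adj E n u v \<longleftrightarrow> length u = n \<and> length v = n \<and>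
     (\<exists>d<n. (\<forall>i<d. u ! i = v ! i) \<and> E (u ! d) (v ! d) \<and>
        (\<forall>i. d < i \<and> i < n \<longrightarrow> u ! i = v ! d \<and> v ! i = u ! d))"

end

theory Submission
  imports Defs
begin

lemma fin_verts: "finite V \<Longrightarrow> finite (sier_verts V n)"
proof -
  assume "finite V"
  have "sier_verts V n = {xs. set xs \<subseteq> V \<and> length xs = n}"
    unfolding sier_verts_def by auto
  thus ?thesis using finite_lists_length_eq[OF \<open>finite V\<close>] by simp
qed

lemma ex_col: "finite S \<Longrightarrow> \<exists>f. injective_coloring S E (card S) f"
proof -
  assume "finite S"
  then obtain h where h: "bij_betw h S {0..<card S}" using ex_bij_betw_finite_nat by blast
  have inj: "inj_on h S" and im: "h ` S = {0..<card S}" using h unfolding bij_betw_def by simp_all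
  have "injective_coloring S E (card S) (\<lambda>v. h v + 1)"
    unfolding injective_coloring_def
  proof (intro conjI ballI impI)
    fix v assume "v \<in> S" hence "h v \<in> {0..<card S}" using im by blast
    thus "h v + 1 \<in> {1..card S}" by simp
  next
    fix u w assume uw: "u \<in> S" "w \<in> S" "u \<noteq> w \<and> h u + 1 = h w + 1"
    hence "h u = h w" by simp
    hence "u = w" using inj_onD[OF inj _ uw(1,2)] by simp
    thus "\<not> (\<exists>x\<in>S. E u x \<and> E w x)" using uw(3) by simp
  qed
  thus ?thesis by blast
qed

lemma chrom_le: "injective_coloring S E k f \<Longrightarrow> inj_chrom S E \<le> k"
  unfolding inj_chrom_def by (rule Least_le) (rule exI)

lemma chrom_ex: "finite S \<Longrightarrow> \<exists>f. injective_coloring S E (inj_chrom S E) f"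
proof -
  assume "finite S"
  then obtain f where f: "injective_coloring S E (card S) f" using ex_col by blast
  have "\<exists>f. injective_coloring S E (LEAST k. \<exists>f. injective_coloring S E k f) f"
    by (rule LeastI_ex) (rule exI, rule exI, rule f)
  thus ?thesis unfolding inj_chrom_def .
qed

lemma lift_adj:
  assumes "sier_adj E 2 u x" "length w = m"
  shows "sier_adj E (m+2) (w@u) (w@x)"
proof -
  from assms(1) obtain d where d: "d < 2" "length u = 2" "length x = 2"
    "\<forall>i<d. u ! i = x ! i" "E (u ! d) (x ! d)"
    "\<forall>i. d < i \<and> i < 2 \<longrightarrow> u ! i = x ! d \<and> x ! i = u ! d"
    unfolding sier_adj_def by blast
  show ?thesis unfolding sier_adj_def
  proof (intro conjI exI[of _ "m+d"])
    show "length (w @ u) = m + 2" "length (w @ x) = m + 2" "m + d < m + 2" using d assms by auto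
    show "\<forall>i<m + d. (w @ u) ! i = (w @ x) ! i" using d(4) assms by (auto simp: nth_append)
    show "E ((w @ u) ! (m + d)) ((w @ x) ! (m + d))" using d(5) assms by (simp add: nth_append)
    show "\<forall>i. m + d < i \<and> i < m + 2 \<longrightarrow>
        (w @ u) ! i = (w @ x) ! (m + d) \<and> (w @ x) ! i = (w @ u) ! (m + d)"
    proof (intro allI impI)
      fix i assume i: "m + d < i \<and> i < m + 2"
      define j where "j = i - m"
      have j: "i = m + j" "d < j" "j < 2" using i unfolding j_def by auto
      have "u!j = x!d" "x!j = u!d" using d(6) j by blast+
      thus "(w @ u) ! i = (w @ x) ! (m + d) \<and> (w @ x) ! i = (w @ u) ! (m + d)"
        using j assms by (simp add: nth_append)
    qed
  qed
qed



lemma adj2: "sier_adj E 2 [a,b] [c,e] \<longleftrightarrow> (a = c \<and> E b e) \<or> (E a c \<and> b = c \<and> e = a)"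
proof
  assume "sier_adj E 2 [a,b] [c,e]"
  then obtain d where d: "d < 2" "\<forall>i<d. [a,b] ! i = [c,e] ! i" "E ([a,b] ! d) ([c,e] ! d)"
        "\<forall>i. d < i \<and> i < 2 \<longrightarrow> [a,b] ! i = [c,e] ! d \<and> [c,e] ! i = [a,b] ! d"
    unfolding sier_adj_def by blast
  show "(a = c \<and> E b e) \<or> (E a c \<and> b = c \<and> e = a)"
  proof (cases "d = 0")
    case True
    with d(4)[rule_format, of 1] d(3) show ?thesis by simp
  next
    case False
    hence "d = 1" using d(1) by simp
    with d(2)[rule_format, of 0] d(3) show ?thesis by simp
  qed
next
  assume h: "(a = c \<and> E b e) \<or> (E a c \<and> b = c \<and> e = a)"
  show "sier_adj E 2 [a,b] [c,e]"
  proof (cases "a = c \<and> E b e")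
    case True
    show ?thesis unfolding sier_adj_def
      by (rule conjI, simp, rule conjI, simp, rule exI[of _ 1]) (use True in \<open>auto simp: less_Suc_eq\<close>)
  next
    case False
    with h have "E a c \<and> b = c \<and> e = a" by blast
    thus ?thesis unfolding sier_adj_def
      by (intro conjI exI[of _ 0]) (auto simp: less_Suc_eq numeral_2_eq_2)
  qed
qed

lemma adj_cases:
  assumes "sier_adj E n u w" "n \<ge> 2"
  shows "((\<forall>i<n-1. u!i = w!i) \<and> E (u!(n-1)) (w!(n-1)))
    \<or> ((\<forall>i<n-2. u!i = w!i) \<and> E (u!(n-2)) (w!(n-2)) \<and> u!(n-1) = w!(n-2) \<and> w!(n-1) = u!(n-2))
    \<or> (\<exists>d<n-2. (\<forall>i<d. u!i = w!i) \<and> E (u!d) (w!d) \<and> (\<forall>i. d<i \<and> i<n \<longrightarrow> u!i = w!d \<and> w!i = u!d))"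
proof -
  from assms(1) obtain d where d: "d < n" "\<forall>i<d. u ! i = w ! i" "E (u ! d) (w ! d)"
        "\<forall>i. d < i \<and> i < n \<longrightarrow> u ! i = w ! d \<and> w ! i = u ! d"
    unfolding sier_adj_def by blast
  consider "d = n-1" | "d = n-2" | "d < n-2" using d(1) assms(2) by linarith
  thus ?thesis
  proof cases
    case 1 thus ?thesis using d by auto
  next
    case 2
    have "u!(n-1) = w!d \<and> w!(n-1) = u!d" using d(4) 2 assms(2) by simp
    thus ?thesis using d 2 by auto
  next
    case 3 thus ?thesis using d by blast
  qed
qed

lemma proj_adj:
  assumes "sier_adj E n u w" "n \<ge> 2" "u!(n-2) \<noteq> u!(n-1)"
  shows "sier_adj E 2 [u!(n-2), u!(n-1)] [w!(n-2), w!(n-1)]"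
proof -
  have ne: "n - 2 < n - 1" using assms(2) by simp
  from adj_cases[OF assms(1,2)] consider
    (A) "(\<forall>i<n-1. u!i = w!i) \<and> E (u!(n-1)) (w!(n-1))"
  | (B) "(\<forall>i<n-2. u!i = w!i) \<and> E (u!(n-2)) (w!(n-2)) \<and> u!(n-1) = w!(n-2) \<and> w!(n-1) = u!(n-2)"
  | (C) "\<exists>d<n-2. (\<forall>i<d. u!i = w!i) \<and> E (u!d) (w!d) \<and> (\<forall>i. d<i \<and> i<n \<longrightarrow> u!i = w!d \<and> w!i = u!d)"
    by blast
  thus ?thesis
  proof cases
    case A thus ?thesis using ne by (simp add: adj2)
  next
    case B thus ?thesis by (simp add: adj2)
  next
    case C
    then obtain d where dd: "d < n-2" "\<forall>i. d<i \<and> i<n \<longrightarrow> u!i = w!d" by blast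
    have "u!(n-2) = w!d" using dd(2)[rule_format, of "n-2"] dd(1) assms(2) by simp
    moreover have "u!(n-1) = w!d" using dd(2)[rule_format, of "n-1"] dd(1) assms(2) by simp
    ultimately have "u!(n-2) = w!d" "u!(n-1) = w!d" by simp_all
    thus ?thesis using assms(3) by simp
  qed
qed

lemma proj_inj:
  assumes "sier_adj E n u w" "sier_adj E n u' w" "n \<ge> 2" "u!(n-2) \<noteq> u!(n-1)"
    "u!(n-2) = u'!(n-2)" "u!(n-1) = u'!(n-1)"
  shows "u = u'"
proof -
  have len: "length u = n" "length u' = n" using assms(1,2) unfolding sier_adj_def by auto
  have ne: "n - 2 < n - 1" using assms(3) by simp
  have notC: False if "\<exists>d<n-2. (\<forall>i<d. v!i = w!i) \<and> E (v!d) (w!d) \<and> (\<forall>i. d<i \<and> i<n \<longrightarrow> v!i = w!d \<and> w!i = v!d)"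
     "v!(n-2) \<noteq> v!(n-1)" for v
  proof -
    from that(1) obtain d where dd: "d < n-2" "\<forall>i. d<i \<and> i<n \<longrightarrow> v!i = w!d" by blast
    have "v!(n-2) = w!d" using dd(2)[rule_format, of "n-2"] dd(1) assms(3) by simp
    moreover have "v!(n-1) = w!d" using dd(2)[rule_format, of "n-1"] dd(1) assms(3) by simp
    ultimately have "v!(n-2) = w!d" "v!(n-1) = w!d" by simp_all
    thus False using that(2) by simp
  qed
  have "(\<forall>i<n-1. u!i = w!i) \<and> E (u!(n-1)) (w!(n-1))
    \<or> (\<forall>i<n-2. u!i = w!i) \<and> E (u!(n-2)) (w!(n-2)) \<and> u!(n-1) = w!(n-2) \<and> w!(n-1) = u!(n-2)"
    using adj_cases[OF assms(1,3)] notC[of u] assms(4) by blast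
  moreover have "(\<forall>i<n-1. u'!i = w!i) \<and> E (u'!(n-1)) (w!(n-1))
    \<or> (\<forall>i<n-2. u'!i = w!i) \<and> E (u'!(n-2)) (w!(n-2)) \<and> u'!(n-1) = w!(n-2) \<and> w!(n-1) = u'!(n-2)"
  proof -
    have "u'!(n-2) \<noteq> u'!(n-1)" using assms(4,5,6) by simp
    thus ?thesis using adj_cases[OF assms(2,3)] notC[of u'] by blast
  qed
  ultimately show ?thesis
  proof (elim disjE conjE)
    assume h: "\<forall>i<n-1. u!i = w!i" "\<forall>i<n-1. u'!i = w!i"
    show "u = u'"
    proof (rule nth_equalityI)
      show "length u = length u'" using len by simp
      fix i assume "i < length u"
      thus "u!i = u'!i" using h assms(6) len by (cases "i = n-1") auto
    qed
  next
    assume h: "\<forall>i<n-2. u!i = w!i" "\<forall>i<n-2. u'!i = w!i"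
    show "u = u'"
    proof (rule nth_equalityI)
      show "length u = length u'" using len by simp
      fix i assume "i < length u"
      thus "u!i = u'!i" using h assms(5,6) len
        by (cases "i = n-1"; cases "i = n-2") auto
    qed
  next
    assume "\<forall>i<n-1. u!i = w!i" "u'!(n-1) = w!(n-2)"
    hence "u!(n-2) = u!(n-1)" using ne assms(6) by simp
    thus "u = u'" using assms(4) by simp
  next
    assume "\<forall>i<n-1. u'!i = w!i" "u!(n-1) = w!(n-2)"
    hence "u!(n-2) = u!(n-1)" using ne assms(5) by simp
    thus "u = u'" using assms(4) by simp
  qed
qed

lemma run_unique:
  assumes "sier_adj E n u w" "sier_adj E n u' w" "n \<ge> 2" "\<forall>x. \<not> E x x"
    "u!(n-2) = u!(n-1)" "u'!(n-2) = u'!(n-1)"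
  shows "u = u'"
proof -
  have len: "length u = n" "length u' = n" using assms(1,2) unfolding sier_adj_def by auto
  have ne: "n - 2 < n - 1" using assms(3) by simp
  have notB: False if "E (v!(n-2)) (w!(n-2)) \<and> v!(n-1) = w!(n-2)" "v!(n-2) = v!(n-1)" for v
    using that assms(4) by metis
  define P where "P v \<longleftrightarrow> (\<exists>d<n-2. (\<forall>i<d. v!i = w!i) \<and> E (v!d) (w!d) \<and> (\<forall>i. d<i \<and> i<n \<longrightarrow> v!i = w!d \<and> w!i = v!d))" for v
  have cu: "(\<forall>i<n-1. u!i = w!i) \<and> E (u!(n-1)) (w!(n-1)) \<or> P u"
    using adj_cases[OF assms(1,3)] notB[of u] assms(5) unfolding P_def by blast
  have cu': "(\<forall>i<n-1. u'!i = w!i) \<and> E (u'!(n-1)) (w!(n-1)) \<or> P u'"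
    using adj_cases[OF assms(2,3)] notB[of u'] assms(6) unfolding P_def by blast
  have Pw: "w!(n-2) = w!(n-1)" if "P v" for v
  proof -
    from that obtain d where dd: "d < n-2" "\<forall>i. d<i \<and> i<n \<longrightarrow> w!i = v!d" unfolding P_def by blast
    have "w!(n-2) = v!d" using dd(2)[rule_format, of "n-2"] dd(1) assms(3) by simp
    moreover have "w!(n-1) = v!d" using dd(2)[rule_format, of "n-1"] dd(1) assms(3) by simp
    ultimately show ?thesis by simp
  qed
  have A_not: "\<not> ((\<forall>i<n-1. v!i = w!i) \<and> E (v!(n-1)) (w!(n-1)))" if "v!(n-2) = v!(n-1)" "w!(n-2) = w!(n-1)" for v
    using that ne assms(4) by metis
  show ?thesis
  proof (cases "P u")
    case True
    hence Pu': "P u'" using cu' A_not[OF assms(6) Pw[OF True]] by blast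
    from True obtain d where d: "d<n-2" "\<forall>i<d. u!i = w!i" "E (u!d) (w!d)" "\<forall>i. d<i \<and> i<n \<longrightarrow> u!i = w!d \<and> w!i = u!d"
      unfolding P_def by blast
    from Pu' obtain d' where d': "d'<n-2" "\<forall>i<d'. u'!i = w!i" "E (u'!d') (w!d')" "\<forall>i. d'<i \<and> i<n \<longrightarrow> u'!i = w!d' \<and> w!i = u'!d'"
      unfolding P_def by blast
    have "\<not> d < d'"
    proof
      assume "d < d'"
      have "w!d' = u!d" using d(4)[rule_format, of d'] \<open>d<d'\<close> d'(1) by simp
      moreover have "w!(n-1) = u'!d'" using d'(4)[rule_format, of "n-1"] d'(1) by simp
      moreover have "w!(n-1) = u!d" using d(4)[rule_format, of "n-1"] d(1) by simp
      ultimately have "w!d' = u!d" "w!(n-1) = u!d" "w!(n-1) = u'!d'" by simp_all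
      thus False using d'(3) assms(4) by metis
    qed
    moreover have "\<not> d' < d"
    proof
      assume "d' < d"
      have "w!d = u'!d'" using d'(4)[rule_format, of d] \<open>d'<d\<close> d(1) by simp
      moreover have "w!(n-1) = u'!d'" using d'(4)[rule_format, of "n-1"] d'(1) by simp
      moreover have "w!(n-1) = u!d" using d(4)[rule_format, of "n-1"] d(1) by simp
      ultimately have "w!d = u'!d'" "w!(n-1) = u'!d'" "w!(n-1) = u!d" by simp_all
      thus False using d(3) assms(4) by metis
    qed
    ultimately have dd: "d = d'" by simp
    show ?thesis
    proof (rule nth_equalityI)
      show "length u = length u'" using len by simp
      fix i assume i: "i < length u"
      consider "i < d" | "i = d" | "d < i" by linarith
      thus "u!i = u'!i"
      proof cases
        case 1 thus ?thesis using d(2) d'(2) dd by simp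
      next
        case 2
        have "w!(n-1) = u'!d'" using d'(4)[rule_format, of "n-1"] d'(1) by simp
        moreover have "w!(n-1) = u!d" using d(4)[rule_format, of "n-1"] d(1) by simp
        ultimately have "w!(n-1) = u!d" "w!(n-1) = u'!d'" by simp_all
        thus ?thesis using 2 dd by simp
      next
        case 3
        have "u!i = w!d" using d(4)[rule_format, of i] 3 i len by simp
        moreover have "u'!i = w!d'" using d'(4)[rule_format, of i] 3 i len dd by simp
        ultimately show ?thesis using dd by simp
      qed
    qed
  next
    case False
    hence A: "(\<forall>i<n-1. u!i = w!i) \<and> E (u!(n-1)) (w!(n-1))" using cu by blast
    have "\<not> P u'" using A_not[OF assms(5)] A Pw by blast
    hence A': "(\<forall>i<n-1. u'!i = w!i)" using cu' by blast
    show ?thesis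
    proof (rule nth_equalityI)
      show "length u = length u'" using len by simp
      fix i assume "i < length u"
      thus "u!i = u'!i" using A A' assms(5,6) len ne
        by (cases "i = n-1") auto
    qed
  qed
qed


lemma col_range: "injective_coloring S E k f \<Longrightarrow> v \<in> S \<Longrightarrow> f v \<in> {1..k}"
  unfolding injective_coloring_def by blast

lemma col_inj: "injective_coloring S E k f \<Longrightarrow> u \<in> S \<Longrightarrow> w \<in> S \<Longrightarrow> u \<noteq> w \<Longrightarrow> f u = f w
  \<Longrightarrow> x \<in> S \<Longrightarrow> E u x \<Longrightarrow> E w x \<Longrightarrow> False"
  unfolding injective_coloring_def by blast

theorem mainTheorem1:
  fixes V :: "'a set" and E :: "'a \<Rightarrow> 'a \<Rightarrow> bool" and n :: nat
  assumes "simple_graph V E" and "n \<ge> 2"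
  shows "inj_chrom (sier_verts V 2) (sier_adj E 2) \<le> inj_chrom (sier_verts V n) (sier_adj E n)
       \<and> inj_chrom (sier_verts V n) (sier_adj E n) \<le> inj_chrom (sier_verts V 2) (sier_adj E 2) + 1"
proof
  have finV: "finite V" and irr: "\<forall>x. \<not> E x x" using assms(1) unfolding simple_graph_def by auto
  have n2: "n - 2 + 2 = n" using assms(2) by simp
  show "inj_chrom (sier_verts V 2) (sier_adj E 2) \<le> inj_chrom (sier_verts V n) (sier_adj E n)"
  proof (cases "V = {}")
    case True
    have "sier_verts V 2 = {}" using True unfolding sier_verts_def by auto
    hence "injective_coloring (sier_verts V 2) (sier_adj E 2) 0 (\<lambda>_. 0)"
      unfolding injective_coloring_def by simp
    hence "inj_chrom (sier_verts V 2) (sier_adj E 2) \<le> 0" by (rule chrom_le)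
    thus ?thesis by simp
  next
    case False
    then obtain a where a: "a \<in> V" by blast
    obtain f where f: "injective_coloring (sier_verts V n) (sier_adj E n) (inj_chrom (sier_verts V n) (sier_adj E n)) f"
      using chrom_ex[OF fin_verts[OF finV]] by blast
    define w where "w = replicate (n-2) a"
    have lw: "length w = n - 2" unfolding w_def by simp
    have memw: "w @ x \<in> sier_verts V n" if "x \<in> sier_verts V 2" for x
      using that a assms(2) unfolding sier_verts_def w_def by auto
    have adjw: "sier_adj E n (w @ u) (w @ x)" if "sier_adj E 2 u x" for u x
      using lift_adj[OF that lw] n2 by simp
    have "injective_coloring (sier_verts V 2) (sier_adj E 2) (inj_chrom (sier_verts V n) (sier_adj E n)) (\<lambda>x. f (w @ x))"
      unfolding injective_coloring_def
    proof (intro conjI ballI impI)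
      fix v assume "v \<in> sier_verts V 2"
      thus "f (w @ v) \<in> {1..inj_chrom (sier_verts V n) (sier_adj E n)}"
        using col_range[OF f memw] by blast
    next
      fix u u' assume u: "u \<in> sier_verts V 2" "u' \<in> sier_verts V 2" "u \<noteq> u' \<and> f (w @ u) = f (w @ u')"
      show "\<not> (\<exists>x\<in>sier_verts V 2. sier_adj E 2 u x \<and> sier_adj E 2 u' x)"
      proof
        assume "\<exists>x\<in>sier_verts V 2. sier_adj E 2 u x \<and> sier_adj E 2 u' x"
        then obtain x where x: "x \<in> sier_verts V 2" "sier_adj E 2 u x" "sier_adj E 2 u' x" by blast
        have "w @ u \<noteq> w @ u'" using u(3) by simp
        moreover have "sier_adj E n (w @ u) (w @ x)" "sier_adj E n (w @ u') (w @ x)"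
          using adjw x by auto
        ultimately show False using col_inj[OF f memw[OF u(1)] memw[OF u(2)] _ _ memw[OF x(1)]] u(3)
          by blast
      qed
    qed
    thus ?thesis by (rule chrom_le)
  qed
next
  have finV: "finite V" and irr: "\<forall>x. \<not> E x x" using assms(1) unfolding simple_graph_def by auto
  obtain g where g: "injective_coloring (sier_verts V 2) (sier_adj E 2) (inj_chrom (sier_verts V 2) (sier_adj E 2)) g"
    using chrom_ex[OF fin_verts[OF finV]] by blast
  define k where "k = inj_chrom (sier_verts V 2) (sier_adj E 2)"
  define L where "L u = [u!(n-2), u!(n-1)]" for u :: "'a list"
  define f where "f u = (if u!(n-2) = u!(n-1) then k + 1 else g (L u))" for u
  have Lmem: "L u \<in> sier_verts V 2" if "u \<in> sier_verts V n" for u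
  proof -
    have "u!(n-2) \<in> set u" "u!(n-1) \<in> set u" using that assms(2) unfolding sier_verts_def by auto
    thus ?thesis using that unfolding sier_verts_def L_def by auto
  qed
  have gk: "g (L u) \<in> {1..k}" if "u \<in> sier_verts V n" for u
    using col_range[OF g Lmem[OF that]] unfolding k_def .
  have "injective_coloring (sier_verts V n) (sier_adj E n) (k+1) f"
    unfolding injective_coloring_def
  proof (intro conjI ballI impI)
    fix v assume "v \<in> sier_verts V n"
    thus "f v \<in> {1..k+1}" using gk unfolding f_def by fastforce
  next
    fix u u' assume u: "u \<in> sier_verts V n" "u' \<in> sier_verts V n" "u \<noteq> u' \<and> f u = f u'"
    show "\<not> (\<exists>x\<in>sier_verts V n. sier_adj E n u x \<and> sier_adj E n u' x)"
    proof
      assume "\<exists>x\<in>sier_verts V n. sier_adj E n u x \<and> sier_adj E n u' x"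
      then obtain x where x: "x \<in> sier_verts V n" "sier_adj E n u x" "sier_adj E n u' x" by blast
      consider "u!(n-2) = u!(n-1)" "u'!(n-2) = u'!(n-1)"
        | "u!(n-2) = u!(n-1)" "u'!(n-2) \<noteq> u'!(n-1)"
        | "u!(n-2) \<noteq> u!(n-1)" "u'!(n-2) = u'!(n-1)"
        | "u!(n-2) \<noteq> u!(n-1)" "u'!(n-2) \<noteq> u'!(n-1)" by blast
      thus False
      proof cases
        case 1 thus False using run_unique[OF x(2,3) assms(2) irr] u(3) by blast
      next
        case 2 thus False using u(3) gk[OF u(2)] unfolding f_def by simp
      next
        case 3 thus False using u(3) gk[OF u(1)] unfolding f_def by simp
      next
        case 4
        have gg: "g (L u) = g (L u')" using u(3) 4 unfolding f_def by simp
        have "L u \<noteq> L u'"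
        proof
          assume "L u = L u'"
          hence "u!(n-2) = u'!(n-2)" "u!(n-1) = u'!(n-1)" unfolding L_def by simp_all
          thus False using proj_inj[OF x(2,3) assms(2) 4(1)] u(3) by blast
        qed
        moreover have "sier_adj E 2 (L u) (L x)" using proj_adj[OF x(2) assms(2) 4(1)] unfolding L_def .
        moreover have "sier_adj E 2 (L u') (L x)" using proj_adj[OF x(3) assms(2) 4(2)] unfolding L_def .
        ultimately show False using col_inj[OF g Lmem[OF u(1)] Lmem[OF u(2)] _ gg Lmem[OF x(1)]]
          by blast
      qed
    qed
  qed
  from chrom_le[OF this]
  show "inj_chrom (sier_verts V n) (sier_adj E n) \<le> inj_chrom (sier_verts V 2) (sier_adj E 2) + 1"
    unfolding k_def .
qed

end
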